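(* Let a trader with concave, increasing utility $U_S$ hold $\Delta>0$ units of a yield token with outstanding random yield payments $Y_1,\dots,Y_n$ (paid in order before maturity). A menu of prices $(p_1,\dots,p_n)$ offers the trader the choice of selling all $\Delta$ tokens just before payment $Y_t$ at price $p_t$ ($t\in\{1,\dots,n\}$), giving expected utility $\tilde U^t_S=\mathbb{E}[U_S((\sum_{i=1}^{t-1}Y_i+p_t)\Delta)]$, or never selling, giving $\tilde U^{n+1}_S=\mathbb{E}[U_S((\sum_{i=1}^nY_i)\Delta)]$. Define $$p_n^*(\Delta)=\sup\Big\{p>0:\ \mathbb{E}\big[U_S((\textstyle\sum_{i=1}^{n-1}Y_i+p)\Delta)\big]\le \mathbb{E}\big[U_S((\sum_{i=1}^nY_i)\Delta)\big]\Big\},$$ and for $t\in\{1,\dots,n-1\}$, $$p_t^*(\Delta)=p_{t+1}^*(\Delta)+\sup\Big\{p>0:\ \mathbb{E}\big[U_S((\textstyle\sum_{i=1}^{t-1}Y_i+p+p^*_{t+1})\Delta)\big]\le \mathbb{E}\big[U_S((\sum_{i=1}^{t}Y_i+p^*_{t+1})\Delta)\big]\Big\}.$$ If the liquidity provider presents the menu $\{p_i^*(\Delta)\}_{i=1}^n$, the trader obtains the same expected utility for each of his $n+1$ actions. Moreover, $\{p_i^*(\Delta)\}_{i=1}^n$ is the unique indifference menu.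
   Context: An indifference menu is a menu of prices $(p_1,\dots,p_n)$ under which $\tilde U^1_S=\tilde U^2_S=\dots=\tilde U^{n+1}_S$. Expectations are over the joint distribution of $Y_1,\dots,Y_n$. *)

theory Defs
  imports "HOL-Probability.Probability"
begin

definition EU_sell :: "'a measure \<Rightarrow> (real \<Rightarrow> real) \<Rightarrow> (nat \<Rightarrow> 'a \<Rightarrow> real) \<Rightarrow> real \<Rightarrow> nat \<Rightarrow> real \<Rightarrow> real"
  where "EU_sell M U Y \<Delta> t p = (LINT \<omega>|M. U (((\<Sum>i\<in>{1..<t}. Y i \<omega>) + p) * \<Delta>))"

definition EU_hold :: "'a measure \<Rightarrow> (real \<Rightarrow> real) \<Rightarrow> (nat \<Rightarrow> 'a \<Rightarrow> real) \<Rightarrow> real \<Rightarrow> nat \<Rightarrow> real"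
  where "EU_hold M U Y \<Delta> n = (LINT \<omega>|M. U ((\<Sum>i\<in>{1..n}. Y i \<omega>) * \<Delta>))"

definition tildeU :: "'a measure \<Rightarrow> (real \<Rightarrow> real) \<Rightarrow> (nat \<Rightarrow> 'a \<Rightarrow> real) \<Rightarrow> real \<Rightarrow> nat \<Rightarrow> (nat \<Rightarrow> real) \<Rightarrow> nat \<Rightarrow> real"
  where "tildeU M U Y \<Delta> n p t = (if t \<le> n then EU_sell M U Y \<Delta> t (p t) else EU_hold M U Y \<Delta> n)"

definition indifference_menu :: "'a measure \<Rightarrow> (real \<Rightarrow> real) \<Rightarrow> (nat \<Rightarrow> 'a \<Rightarrow> real) \<Rightarrow> real \<Rightarrow> nat \<Rightarrow> (nat \<Rightarrow> real) \<Rightarrow> bool"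
  where "indifference_menu M U Y \<Delta> n p \<longleftrightarrow>
    (\<forall>s\<in>{1..n+1}. \<forall>t\<in>{1..n+1}. tildeU M U Y \<Delta> n p s = tildeU M U Y \<Delta> n p t)"

text \<open>pstar_aux ... n k = p^*_(n-k)(Delta), computed by backward recursion.\<close>
fun pstar_aux :: "'a measure \<Rightarrow> (real \<Rightarrow> real) \<Rightarrow> (nat \<Rightarrow> 'a \<Rightarrow> real) \<Rightarrow> real \<Rightarrow> nat \<Rightarrow> nat \<Rightarrow> real" where
  "pstar_aux M U Y \<Delta> n 0 =
     Sup {p. p > 0 \<and>
       (LINT \<omega>|M. U (((\<Sum>i\<in>{1..<n}. Y i \<omega>) + p) * \<Delta>))
         \<le> (LINT \<omega>|M. U ((\<Sum>i\<in>{1..n}. Y i \<omega>) * \<Delta>))}"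
| "pstar_aux M U Y \<Delta> n (Suc k) =
     (let t = n - Suc k; q = pstar_aux M U Y \<Delta> n k in
       q + Sup {p. p > 0 \<and>
         (LINT \<omega>|M. U (((\<Sum>i\<in>{1..<t}. Y i \<omega>) + p + q) * \<Delta>))
           \<le> (LINT \<omega>|M. U (((\<Sum>i\<in>{1..t}. Y i \<omega>) + q) * \<Delta>))})"

definition pstar :: "'a measure \<Rightarrow> (real \<Rightarrow> real) \<Rightarrow> (nat \<Rightarrow> 'a \<Rightarrow> real) \<Rightarrow> real \<Rightarrow> nat \<Rightarrow> nat \<Rightarrow> real"
  where "pstar M U Y \<Delta> n t = pstar_aux M U Y \<Delta> n (n - t)"

end

theory Submission
  imports Defs
begin

context
  fixes M :: "'a measure" and U :: "real \<Rightarrow> real" and \<Delta> :: real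
  assumes P: "prob_space M" and conc: "concave_on UNIV U" and sm: "strict_mono U" and D: "\<Delta> > 0"
begin

lemma U_mono: "x \<le> y \<Longrightarrow> U x \<le> U y"
  using sm strict_mono_mono monoD by blast

lemma U_less: "x < y \<Longrightarrow> U x < U y"
  using sm strict_monoD by blast

lemma U_borel[measurable]: "U \<in> borel_measurable borel"
  using borel_measurable_mono sm strict_mono_mono by blast

lemma U_cont: "continuous_on UNIV U"
proof -
  have "convex_on UNIV (\<lambda>x. - U x)" using conc by (simp add: concave_on_def)
  then have "continuous_on UNIV (\<lambda>x. - U x)" by (intro convex_on_continuous) auto
  from continuous_on_minus[OF this] show ?thesis by simp
qed

lemma U_lin:
  assumes z: "z \<ge> 0"
  shows "U z \<le> U 0 + (U 0 - U (-1)) * z"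
proof -
  have "(1 - 1/(z+1)) * U (-1) + (1/(z+1)) * U z \<le> U ((1 - 1/(z+1)) *\<^sub>R (-1) + (1/(z+1)) *\<^sub>R z)"
    using concave_onD[OF conc, of "1/(z+1)" "-1" z] z by auto
  also have "(1 - 1/(z+1)) *\<^sub>R (-1) + (1/(z+1)) *\<^sub>R z = (0::real)"
    using z by (simp add: field_simps)
  finally have "(1 - 1/(z+1)) * U (-1) + (1/(z+1)) * U z \<le> U 0" .
  then have "(z+1) * ((1 - 1/(z+1)) * U (-1) + (1/(z+1)) * U z) \<le> (z+1) * U 0"
    using z by (intro mult_left_mono) auto
  moreover have "(z+1) * ((1 - 1/(z+1)) * U (-1) + (1/(z+1)) * U z) = z * U (-1) + U z"
  proof -
    have zz: "z + 1 \<noteq> 0" using z by simp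
    define a where "a = 1/(z+1)"
    have a1: "(z+1) * a = 1" using zz by (simp add: a_def)
    have "(z+1) * ((1 - a) * U (-1) + a * U z) = (z+1) * U (-1) - ((z+1) * a) * U (-1) + ((z+1) * a) * U z"
      by (simp add: algebra_simps)
    also have "\<dots> = z * U (-1) + U z" using a1 by (simp add: algebra_simps)
    finally show ?thesis by (simp add: a_def)
  qed
  ultimately have "z * U (-1) + U z \<le> (z+1) * U 0" by simp
  then show ?thesis by (simp add: algebra_simps)
qed

lemma integ:
  assumes X: "integrable M X" "AE \<omega> in M. 0 \<le> X \<omega>"
  shows "integrable M (\<lambda>\<omega>. U ((X \<omega> + x) * \<Delta>))"
proof -
  interpret prob_space M by (rule P)
  define m where "m = U 0 - U (-1)"
  have m: "m > 0" using U_less[of "-1" 0] by (simp add: m_def)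
  have [measurable]: "X \<in> borel_measurable M" using X by auto
  have b1: "integrable M (\<lambda>\<omega>. \<bar>U 0\<bar> + \<bar>U (x*\<Delta>)\<bar> + m * ((\<bar>X \<omega>\<bar> + \<bar>x\<bar>) * \<Delta>))"
      using X by simp
    have b2: "(\<lambda>\<omega>. U ((X \<omega> + x) * \<Delta>)) \<in> borel_measurable M" by measurable
    have b3: "AE \<omega> in M. norm (U ((X \<omega> + x) * \<Delta>)) \<le> norm (\<bar>U 0\<bar> + \<bar>U (x*\<Delta>)\<bar> + m * ((\<bar>X \<omega>\<bar> + \<bar>x\<bar>) * \<Delta>))"
      using X(2)
    proof eventually_elim
      case (elim \<omega>)
      define z where "z = (X \<omega> + x) * \<Delta>"
      have zb: "z \<le> (\<bar>X \<omega>\<bar> + \<bar>x\<bar>) * \<Delta>" unfolding z_def using D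
        by (intro mult_right_mono) auto
      have nn: "0 \<le> m * ((\<bar>X \<omega>\<bar> + \<bar>x\<bar>) * \<Delta>)" using m D by auto
      have lo: "U (x*\<Delta>) \<le> U z" unfolding z_def using elim D by (intro U_mono mult_right_mono) auto
      have up: "U z \<le> \<bar>U 0\<bar> + m * ((\<bar>X \<omega>\<bar> + \<bar>x\<bar>) * \<Delta>)"
      proof (cases "z \<ge> 0")
        case True
        have "U z \<le> U 0 + m * z" using U_lin[OF True] by (simp add: m_def)
        also have "m * z \<le> m * ((\<bar>X \<omega>\<bar> + \<bar>x\<bar>) * \<Delta>)" using m zb by (intro mult_left_mono) auto
        finally show ?thesis by linarith
      next
        case False
        then have "U z \<le> U 0" by (intro U_mono) auto
        then show ?thesis using nn by linarith
      qed
      have "\<bar>U z\<bar> \<le> \<bar>U 0\<bar> + \<bar>U (x*\<Delta>)\<bar> + m * ((\<bar>X \<omega>\<bar> + \<bar>x\<bar>) * \<Delta>)"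
        using lo up nn by (simp add: abs_le_iff) linarith
      then show ?case unfolding z_def using nn by simp
    qed
  show ?thesis by (rule Bochner_Integration.integrable_bound[OF b1 b2 b3])
qed

lemma H_less:
  assumes X: "integrable M X" "AE \<omega> in M. 0 \<le> X \<omega>" and ab: "a < b"
  shows "(\<integral>\<omega>. U ((X \<omega> + a) * \<Delta>) \<partial>M) < (\<integral>\<omega>. U ((X \<omega> + b) * \<Delta>) \<partial>M)"
proof -
  interpret prob_space M by (rule P)
  show ?thesis
    using ab D by (intro integral_less_AE_space integ[OF X] U_less AE_I2 mult_strict_right_mono) (auto simp: emeasure_space_1)
qed

lemma H_concave:
  assumes X: "integrable M X" "AE \<omega> in M. 0 \<le> X \<omega>"
  shows "concave_on UNIV (\<lambda>x. \<integral>\<omega>. U ((X \<omega> + x) * \<Delta>) \<partial>M)"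
  unfolding concave_on_iff
proof (intro conjI ballI allI impI)
  fix x y u v :: real assume uv: "0 \<le> u" "0 \<le> v" "u + v = 1"
  have "u * (\<integral>\<omega>. U ((X \<omega> + x) * \<Delta>) \<partial>M) + v * (\<integral>\<omega>. U ((X \<omega> + y) * \<Delta>) \<partial>M)
     = (\<integral>\<omega>. u * U ((X \<omega> + x) * \<Delta>) + v * U ((X \<omega> + y) * \<Delta>) \<partial>M)"
    using integ[OF X] by simp
  also have "\<dots> \<le> (\<integral>\<omega>. U ((X \<omega> + (u *\<^sub>R x + v *\<^sub>R y)) * \<Delta>) \<partial>M)"
  proof (rule integral_mono)
    show "integrable M (\<lambda>\<omega>. u * U ((X \<omega> + x) * \<Delta>) + v * U ((X \<omega> + y) * \<Delta>))"
      using integ[OF X, of x] integ[OF X, of y] by simp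
    show "integrable M (\<lambda>\<omega>. U ((X \<omega> + (u *\<^sub>R x + v *\<^sub>R y)) * \<Delta>))"
      by (intro integ[OF X])
    fix \<omega>
    have "u * U ((X \<omega> + x) * \<Delta>) + v * U ((X \<omega> + y) * \<Delta>)
       \<le> U (u *\<^sub>R ((X \<omega> + x) * \<Delta>) + v *\<^sub>R ((X \<omega> + y) * \<Delta>))"
      using conc uv unfolding concave_on_iff by blast
    also have "u *\<^sub>R ((X \<omega> + x) * \<Delta>) + v *\<^sub>R ((X \<omega> + y) * \<Delta>) = (X \<omega> + (u *\<^sub>R x + v *\<^sub>R y)) * \<Delta>"
    proof -
      have "u *\<^sub>R ((X \<omega> + x) * \<Delta>) + v *\<^sub>R ((X \<omega> + y) * \<Delta>) = ((u + v) * X \<omega> + (u * x + v * y)) * \<Delta>"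
        by (simp add: algebra_simps)
      then show ?thesis using uv by simp
    qed
    finally show "u * U ((X \<omega> + x) * \<Delta>) + v * U ((X \<omega> + y) * \<Delta>)
       \<le> U ((X \<omega> + (u *\<^sub>R x + v *\<^sub>R y)) * \<Delta>)" .
  qed
  finally show "u * (\<integral>\<omega>. U ((X \<omega> + x) * \<Delta>) \<partial>M) + v * (\<integral>\<omega>. U ((X \<omega> + y) * \<Delta>) \<partial>M)
     \<le> (\<integral>\<omega>. U ((X \<omega> + (u *\<^sub>R x + v *\<^sub>R y)) * \<Delta>) \<partial>M)" .
qed auto

lemma H_cont:
  assumes X: "integrable M X" "AE \<omega> in M. 0 \<le> X \<omega>"
  shows "continuous_on UNIV (\<lambda>x. \<integral>\<omega>. U ((X \<omega> + x) * \<Delta>) \<partial>M)"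
proof -
  have "convex_on UNIV (\<lambda>x. - (\<integral>\<omega>. U ((X \<omega> + x) * \<Delta>) \<partial>M))"
    using H_concave[OF X] by (simp add: concave_on_def)
  then have "continuous_on UNIV (\<lambda>x. - (\<integral>\<omega>. U ((X \<omega> + x) * \<Delta>) \<partial>M))"
    by (intro convex_on_continuous) auto
  from continuous_on_minus[OF this] show ?thesis by simp
qed

lemma exists_big:
  assumes X: "integrable M X" "AE \<omega> in M. 0 \<le> X \<omega>"
    and Z: "integrable M Z" "AE \<omega> in M. 0 \<le> Z \<omega>"
  shows "\<exists>k>0. (\<integral>\<omega>. U ((X \<omega> + Z \<omega> + q) * \<Delta>) \<partial>M) < (\<integral>\<omega>. U ((X \<omega> + (q + k)) * \<Delta>) \<partial>M)"
proof -
  interpret prob_space M by (rule P)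
  have [measurable]: "X \<in> borel_measurable M" "Z \<in> borel_measurable M" using X Z by auto
  have XZ: "integrable M (\<lambda>\<omega>. X \<omega> + Z \<omega>)" "AE \<omega> in M. 0 \<le> X \<omega> + Z \<omega>"
    using X Z by auto
  define g where "g \<omega> = U ((X \<omega> + Z \<omega> + q) * \<Delta>)" for \<omega>
  define f where "f k \<omega> = U ((X \<omega> + (q + k)) * \<Delta>)" for k \<omega>
  define W where "W \<omega> = g \<omega> - U ((X \<omega> + q) * \<Delta>)" for \<omega>
  have intg: "integrable M g" unfolding g_def using integ[OF XZ, of q] by simp
  have intf: "integrable M (f k)" for k unfolding f_def by (rule integ[OF X])
  have intW: "integrable M W" unfolding W_def using intg integ[OF X, of q] by auto
  have [measurable]: "g \<in> borel_measurable M" "f k \<in> borel_measurable M" "W \<in> borel_measurable M" for k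
    using intg intf intW by auto
  define k0 where "k0 = (\<integral>\<omega>. Z \<omega> \<partial>M) + 1"
  have "(\<integral>\<omega>. Z \<omega> \<partial>M) \<ge> 0" using Z(2) by (rule integral_nonneg_AE)
  then have k0: "k0 > 0" unfolding k0_def by simp
  have "measure M {\<omega>\<in>space M. Z \<omega> \<ge> k0} \<le> (\<integral>\<omega>. Z \<omega> \<partial>M) / k0"
    by (rule integral_Markov_inequality_measure[OF Z(1) sets.top Z(2) k0])
  also have "\<dots> < 1" using k0 unfolding k0_def by (simp add: field_simps)
  finally have m1: "measure M {\<omega>\<in>space M. Z \<omega> \<ge> k0} < 1" .
  define A0 where "A0 = {\<omega>\<in>space M. Z \<omega> < k0}"
  have A0s[measurable]: "A0 \<in> sets M" unfolding A0_def by measurable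
  have "A0 = space M - {\<omega>\<in>space M. Z \<omega> \<ge> k0}" unfolding A0_def by auto
  then have "measure M A0 = 1 - measure M {\<omega>\<in>space M. Z \<omega> \<ge> k0}"
    by (simp add: prob_compl)
  with m1 have "measure M A0 > 0" by simp
  then have A0e: "emeasure M A0 \<noteq> 0" by (simp add: emeasure_eq_measure)
  define c where "c = (\<integral>\<omega>. (f k0 \<omega> - g \<omega>) * indicator A0 \<omega> \<partial>M)"
  have intc: "integrable M (\<lambda>\<omega>. (f k0 \<omega> - g \<omega>) * indicator A0 \<omega>)"
    using intf intg by (intro integrable_real_mult_indicator A0s) auto
  have "(\<integral>\<omega>. 0 \<partial>M) < c" unfolding c_def
  proof (rule integral_less_AE[OF _ intc A0e A0s])
    show "integrable M (\<lambda>\<omega>. 0::real)" by simp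
    have lt: "g \<omega> < f k0 \<omega>" if "\<omega> \<in> A0" for \<omega>
      unfolding g_def f_def using that D by (intro U_less mult_strict_right_mono) (auto simp: A0_def)
    show "AE \<omega> in M. \<omega> \<in> A0 \<longrightarrow> 0 \<noteq> (f k0 \<omega> - g \<omega>) * indicator A0 \<omega>"
      using lt by (auto intro!: AE_I2) (metis less_irrefl)
    show "AE \<omega> in M. 0 \<le> (f k0 \<omega> - g \<omega>) * indicator A0 \<omega>"
      using lt by (auto intro!: AE_I2 simp: indicator_def less_imp_le)
  qed
  then have c: "c > 0" by simp
  define T where "T k = (\<integral>\<omega>. W \<omega> * indicator {\<omega>\<in>space M. real k \<le> Z \<omega>} \<omega> \<partial>M)" for k :: nat
  have "(\<lambda>k. T k) \<longlonglongrightarrow> (\<integral>\<omega>. 0 \<partial>M)" unfolding T_def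
  proof (rule integral_dominated_convergence[where w="\<lambda>\<omega>. \<bar>W \<omega>\<bar>"])
    show "(\<lambda>\<omega>. 0::real) \<in> borel_measurable M" by simp
    show "(\<lambda>\<omega>. W \<omega> * indicator {\<omega> \<in> space M. real k \<le> Z \<omega>} \<omega>) \<in> borel_measurable M" for k
      by measurable
    show "integrable M (\<lambda>\<omega>. \<bar>W \<omega>\<bar>)" using intW by auto
    show "AE \<omega> in M. norm (W \<omega> * indicator {\<omega> \<in> space M. real k \<le> Z \<omega>} \<omega>) \<le> \<bar>W \<omega>\<bar>" for k
      by (auto intro!: AE_I2 simp: indicator_def)
    show "AE \<omega> in M. (\<lambda>k. W \<omega> * indicator {\<omega> \<in> space M. real k \<le> Z \<omega>} \<omega>) \<longlonglongrightarrow> 0"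
    proof (rule AE_I2, rule tendsto_eventually)
      fix \<omega>
      obtain N :: nat where N: "Z \<omega> < real N" using reals_Archimedean2 by blast
      show "\<forall>\<^sub>F k in sequentially. W \<omega> * indicator {\<omega> \<in> space M. real k \<le> Z \<omega>} \<omega> = 0"
        unfolding eventually_sequentially
        using N by (intro exI[of _ N]) (auto simp: indicator_def)
    qed
  qed
  then have "(\<lambda>k. T k) \<longlonglongrightarrow> 0" by simp
  then have ev1: "\<forall>\<^sub>F k in sequentially. T k < c" using c by (rule order_tendstoD)
  obtain N0 :: nat where N0: "k0 \<le> real N0" using real_arch_simple by blast
  have ev2: "\<forall>\<^sub>F k in sequentially. k0 \<le> real k"
    unfolding eventually_sequentially using N0 by (intro exI[of _ N0]) auto
  obtain k :: nat where kT: "T k < c" and kk: "k0 \<le> real k"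
    using eventually_happens'[OF _ eventually_conj[OF ev1 ev2]] by auto
  define K where "K = real k"
  have K: "k0 \<le> K" "K > 0" using kk k0 unfolding K_def by auto
  have intT: "integrable M (\<lambda>\<omega>. W \<omega> * indicator {\<omega>\<in>space M. K \<le> Z \<omega>} \<omega>)"
    using intW by (intro integrable_real_mult_indicator) auto
  have "c - T k = (\<integral>\<omega>. (f k0 \<omega> - g \<omega>) * indicator A0 \<omega> - W \<omega> * indicator {\<omega>\<in>space M. K \<le> Z \<omega>} \<omega> \<partial>M)"
    unfolding c_def T_def K_def using intc intT[unfolded K_def] by (simp add: Bochner_Integration.integral_diff)
  also have "\<dots> \<le> (\<integral>\<omega>. f K \<omega> - g \<omega> \<partial>M)"
  proof (rule integral_mono)
    show "integrable M (\<lambda>\<omega>. (f k0 \<omega> - g \<omega>) * indicator A0 \<omega> - W \<omega> * indicator {\<omega>\<in>space M. K \<le> Z \<omega>} \<omega>)"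
      using intc intT by auto
    show "integrable M (\<lambda>\<omega>. f K \<omega> - g \<omega>)" using intf intg by auto
    fix \<omega> assume \<omega>: "\<omega> \<in> space M"
    have m1: "f k0 \<omega> \<le> f K \<omega>" unfolding f_def using K D by (intro U_mono mult_right_mono) auto
    have m2: "Z \<omega> < K \<Longrightarrow> g \<omega> \<le> f K \<omega>" unfolding f_def g_def using D by (intro U_mono mult_right_mono) auto
    have m3: "U ((X \<omega> + q) * \<Delta>) \<le> f K \<omega>" unfolding f_def using K D by (intro U_mono mult_right_mono) auto
    show "(f k0 \<omega> - g \<omega>) * indicator A0 \<omega> - W \<omega> * indicator {\<omega>\<in>space M. K \<le> Z \<omega>} \<omega> \<le> f K \<omega> - g \<omega>"
    proof (cases "Z \<omega> < k0")
      case True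
      then show ?thesis using \<omega> m1 K by (simp add: A0_def indicator_def)
    next
      case False
      then show ?thesis using \<omega> m2 m3 by (auto simp: A0_def indicator_def W_def)
    qed
  qed
  also have "\<dots> = (\<integral>\<omega>. f K \<omega> \<partial>M) - (\<integral>\<omega>. g \<omega> \<partial>M)"
    using intf intg by (simp add: Bochner_Integration.integral_diff)
  finally have "(\<integral>\<omega>. g \<omega> \<partial>M) < (\<integral>\<omega>. f K \<omega> \<partial>M)" using kT by linarith
  then show ?thesis using K unfolding f_def g_def by blast
qed

lemma core:
  assumes X: "integrable M X" "AE \<omega> in M. 0 \<le> X \<omega>"
    and Z: "integrable M Z" "AE \<omega> in M. 0 \<le> Z \<omega>" "measure M {\<omega>\<in>space M. Z \<omega> > 0} > 0"
  shows "\<exists>s>0. (\<integral>\<omega>. U ((X \<omega> + (q + s)) * \<Delta>) \<partial>M) = (\<integral>\<omega>. U ((X \<omega> + Z \<omega> + q) * \<Delta>) \<partial>M)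
     \<and> (\<forall>p. (\<integral>\<omega>. U ((X \<omega> + (q + p)) * \<Delta>) \<partial>M) \<le> (\<integral>\<omega>. U ((X \<omega> + Z \<omega> + q) * \<Delta>) \<partial>M) \<longleftrightarrow> p \<le> s)"
proof -
  interpret prob_space M by (rule P)
  have [measurable]: "X \<in> borel_measurable M" "Z \<in> borel_measurable M" using X Z by auto
  have XZ: "integrable M (\<lambda>\<omega>. X \<omega> + Z \<omega>)" "AE \<omega> in M. 0 \<le> X \<omega> + Z \<omega>"
    using X Z by auto
  define H where "H x = (\<integral>\<omega>. U ((X \<omega> + x) * \<Delta>) \<partial>M)" for x
  define R where "R = (\<integral>\<omega>. U ((X \<omega> + Z \<omega> + q) * \<Delta>) \<partial>M)"
  have intR: "integrable M (\<lambda>\<omega>. U ((X \<omega> + Z \<omega> + q) * \<Delta>))" using integ[OF XZ, of q] by simp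
  define A where "A = {\<omega>\<in>space M. Z \<omega> > 0}"
  have As[measurable]: "A \<in> sets M" unfolding A_def by measurable
  have Ae: "emeasure M A \<noteq> 0" using Z(3) unfolding A_def by (simp add: emeasure_eq_measure)
  have "H q < R" unfolding H_def R_def
  proof (rule integral_less_AE[OF integ[OF X] intR Ae As])
    show "AE \<omega> in M. \<omega> \<in> A \<longrightarrow> U ((X \<omega> + q) * \<Delta>) \<noteq> U ((X \<omega> + Z \<omega> + q) * \<Delta>)"
    proof (rule AE_I2, rule impI)
      fix \<omega> assume "\<omega> \<in> A"
      then have "U ((X \<omega> + q) * \<Delta>) < U ((X \<omega> + Z \<omega> + q) * \<Delta>)"
        using D by (intro U_less mult_strict_right_mono) (auto simp: A_def)
      then show "U ((X \<omega> + q) * \<Delta>) \<noteq> U ((X \<omega> + Z \<omega> + q) * \<Delta>)" by simp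
    qed
    show "AE \<omega> in M. U ((X \<omega> + q) * \<Delta>) \<le> U ((X \<omega> + Z \<omega> + q) * \<Delta>)"
      using Z(2) by eventually_elim (use D in \<open>auto intro!: U_mono mult_right_mono\<close>)
  qed
  obtain k where k: "k > 0" "R < H (q + k)"
    using exists_big[OF X Z(1,2), of q] unfolding H_def R_def by auto
  have cont: "continuous_on {0..k} (\<lambda>s. H (q + s))"
  proof -
    have Hc: "continuous_on UNIV H" using H_cont[OF X] unfolding H_def[abs_def] .
    have "continuous_on {0..k} (\<lambda>s. q + s)" by (intro continuous_intros)
    then show ?thesis by (rule continuous_on_compose2[OF Hc]) auto
  qed
  have "H (q + 0) \<le> R" "R \<le> H (q + k)" using \<open>H q < R\<close> k by auto
  from IVT'[of "\<lambda>s. H (q + s)", OF this _ cont] k obtain s where s: "0 \<le> s" "s \<le> k" "H (q + s) = R"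
    by auto
  have "s \<noteq> 0" using s \<open>H q < R\<close> by auto
  with s have sp: "s > 0" by simp
  have iff: "H (q + p) \<le> R \<longleftrightarrow> p \<le> s" for p
  proof
    assume "H (q + p) \<le> R"
    then show "p \<le> s" using H_less[OF X, of "q + s" "q + p"] s unfolding H_def by force
  next
    assume "p \<le> s"
    then show "H (q + p) \<le> R" using H_less[OF X, of "q + p" "q + s"] s unfolding H_def
      by (cases "p = s") force+
  qed
  show ?thesis using sp s iff unfolding H_def R_def by blast
qed

end

theorem lemma19:
  fixes M :: "'a measure" and U :: "real \<Rightarrow> real" and Y :: "nat \<Rightarrow> 'a \<Rightarrow> real"
    and \<Delta> :: real and n :: nat
  assumes "prob_space M"
    and "n \<ge> 1"
    and "concave_on UNIV U"
    and "strict_mono U"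
    and "\<Delta> > 0"
    and "\<forall>i\<in>{1..n}. integrable M (Y i)"
    and "\<forall>i\<in>{1..n}. AE \<omega> in M. Y i \<omega> \<ge> 0"
    and "\<forall>i\<in>{1..n}. measure M {\<omega>\<in>space M. Y i \<omega> > 0} > 0"
  shows "indifference_menu M U Y \<Delta> n (pstar M U Y \<Delta> n)
    \<and> (\<forall>p. indifference_menu M U Y \<Delta> n p \<longrightarrow> (\<forall>t\<in>{1..n}. p t = pstar M U Y \<Delta> n t))"
proof -
  note P = assms(1) and conc = assms(3) and sm = assms(4) and D = assms(5)
  interpret prob_space M by (rule P)
  have intS: "integrable M (\<lambda>\<omega>. \<Sum>i\<in>{1..<t}. Y i \<omega>)" if "t \<le> n + 1" for t
    by (rule Bochner_Integration.integrable_sum) (use assms(6) that in auto)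
  have posS: "AE \<omega> in M. 0 \<le> (\<Sum>i\<in>{1..<t}. Y i \<omega>)" if "t \<le> n + 1" for t
  proof -
    have "AE \<omega> in M. \<forall>i\<in>{1..<t}. 0 \<le> Y i \<omega>"
      using assms(7) that by (intro AE_finite_allI) auto
    then show ?thesis by eventually_elim (auto intro: sum_nonneg)
  qed
  have split: "(\<Sum>i\<in>{1..<t}. Y i \<omega>) + Y t \<omega> = (\<Sum>i\<in>{1..t}. Y i \<omega>)" if "t \<ge> 1" for t \<omega>
    using that by (simp add: atLeastLessThanSuc_atLeastAtMost[symmetric] sum.atLeastLessThan_Suc)
  have split2: "(\<Sum>i\<in>{1..<Suc t}. Y i \<omega>) = (\<Sum>i\<in>{1..t}. Y i \<omega>)" for t \<omega>
    by (simp add: atLeastLessThanSuc_atLeastAtMost)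
  define R where "R = (\<integral>\<omega>. U ((\<Sum>i\<in>{1..n}. Y i \<omega>) * \<Delta>) \<partial>M)"
  define PS where "PS k = pstar_aux M U Y \<Delta> n k" for k
  have key: "k < n \<Longrightarrow> (\<integral>\<omega>. U (((\<Sum>i\<in>{1..<n-k}. Y i \<omega>) + PS k) * \<Delta>) \<partial>M) = R" for k
  proof (induction k)
    case 0
    have t: "1 \<le> n" "n \<le> n + 1" using assms(2) by auto
    have Yn: "integrable M (Y n)" "AE \<omega> in M. 0 \<le> Y n \<omega>" "measure M {\<omega>\<in>space M. Y n \<omega> > 0} > 0"
      using assms(6-8) t(1) by auto
    obtain s where s: "s > 0"
      "(\<integral>\<omega>. U (((\<Sum>i\<in>{1..<n}. Y i \<omega>) + (0 + s)) * \<Delta>) \<partial>M) = (\<integral>\<omega>. U (((\<Sum>i\<in>{1..<n}. Y i \<omega>) + Y n \<omega> + 0) * \<Delta>) \<partial>M)"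
      and s3: "\<forall>p. (\<integral>\<omega>. U (((\<Sum>i\<in>{1..<n}. Y i \<omega>) + (0 + p)) * \<Delta>) \<partial>M) \<le> (\<integral>\<omega>. U (((\<Sum>i\<in>{1..<n}. Y i \<omega>) + Y n \<omega> + 0) * \<Delta>) \<partial>M) \<longleftrightarrow> p \<le> s"
      using core[OF P conc sm D intS[OF t(2)] posS[OF t(2)] Yn, of 0] by blast
    have RR: "(\<integral>\<omega>. U (((\<Sum>i\<in>{1..<n}. Y i \<omega>) + Y n \<omega> + 0) * \<Delta>) \<partial>M) = R"
      unfolding R_def using split[OF t(1)] by simp
    have s3': "(\<integral>\<omega>. U (((\<Sum>i\<in>{1..<n}. Y i \<omega>) + p) * \<Delta>) \<partial>M) \<le> R \<longleftrightarrow> p \<le> s" for p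
      using s3[rule_format, of p] unfolding RR by simp
    have "{p. p > 0 \<and> (\<integral>\<omega>. U (((\<Sum>i\<in>{1..<n}. Y i \<omega>) + p) * \<Delta>) \<partial>M) \<le> R} = {0<..s}"
      unfolding s3' by auto
    then have "PS 0 = s" unfolding PS_def using s(1) by (simp add: R_def)
    then show ?case using s(2) RR by simp
  next
    case (Suc k)
    define t where "t = n - Suc k"
    have t: "1 \<le> t" "t \<le> n + 1" "Suc t = n - k" "t \<le> n" using Suc.prems unfolding t_def by auto
    define q where "q = PS k"
    have IH: "(\<integral>\<omega>. U (((\<Sum>i\<in>{1..<Suc t}. Y i \<omega>) + q) * \<Delta>) \<partial>M) = R"
      using Suc.IH Suc.prems t(3) unfolding q_def by simp
    have Yt: "integrable M (Y t)" "AE \<omega> in M. 0 \<le> Y t \<omega>" "measure M {\<omega>\<in>space M. Y t \<omega> > 0} > 0"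
      using assms(6-8) t(1,4) by auto
    obtain s where s: "s > 0"
      "(\<integral>\<omega>. U (((\<Sum>i\<in>{1..<t}. Y i \<omega>) + (q + s)) * \<Delta>) \<partial>M) = (\<integral>\<omega>. U (((\<Sum>i\<in>{1..<t}. Y i \<omega>) + Y t \<omega> + q) * \<Delta>) \<partial>M)"
      and s3: "\<forall>p. (\<integral>\<omega>. U (((\<Sum>i\<in>{1..<t}. Y i \<omega>) + (q + p)) * \<Delta>) \<partial>M) \<le> (\<integral>\<omega>. U (((\<Sum>i\<in>{1..<t}. Y i \<omega>) + Y t \<omega> + q) * \<Delta>) \<partial>M) \<longleftrightarrow> p \<le> s"
      using core[OF P conc sm D intS[OF t(2)] posS[OF t(2)] Yt, of q] by blast
    have RR: "(\<integral>\<omega>. U (((\<Sum>i\<in>{1..<t}. Y i \<omega>) + Y t \<omega> + q) * \<Delta>) \<partial>M)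
        = (\<integral>\<omega>. U (((\<Sum>i\<in>{1..t}. Y i \<omega>) + q) * \<Delta>) \<partial>M)"
      using split[OF t(1)] by simp
    have eqp: "(\<Sum>i\<in>{1..<t}. Y i \<omega>) + p + q = (\<Sum>i\<in>{1..<t}. Y i \<omega>) + (q + p)" for p \<omega>
      by simp
    have s3': "(\<integral>\<omega>. U (((\<Sum>i\<in>{1..<t}. Y i \<omega>) + p + q) * \<Delta>) \<partial>M) \<le> (\<integral>\<omega>. U (((\<Sum>i\<in>{1..t}. Y i \<omega>) + q) * \<Delta>) \<partial>M) \<longleftrightarrow> p \<le> s" for p
    proof -
      have "(\<integral>\<omega>. U (((\<Sum>i\<in>{1..<t}. Y i \<omega>) + (q + p)) * \<Delta>) \<partial>M) \<le> (\<integral>\<omega>. U (((\<Sum>i\<in>{1..t}. Y i \<omega>) + q) * \<Delta>) \<partial>M) \<longleftrightarrow> p \<le> s"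
        using s3[rule_format, of p] unfolding RR .
      then show ?thesis unfolding eqp .
    qed
    have "{p. p > 0 \<and> (\<integral>\<omega>. U (((\<Sum>i\<in>{1..<t}. Y i \<omega>) + p + q) * \<Delta>) \<partial>M) \<le> (\<integral>\<omega>. U (((\<Sum>i\<in>{1..t}. Y i \<omega>) + q) * \<Delta>) \<partial>M)} = {0<..s}"
      unfolding s3' by auto
    then have "PS (Suc k) = q + s" unfolding PS_def q_def using s(1) by (simp add: Let_def t_def)
    moreover have "(\<integral>\<omega>. U (((\<Sum>i\<in>{1..<n - Suc k}. Y i \<omega>) + (q + s)) * \<Delta>) \<partial>M) = R"
      using s(2) RR IH unfolding t_def[symmetric] split2 by simp
    ultimately show ?case by simp
  qed
  have tU: "tildeU M U Y \<Delta> n (pstar M U Y \<Delta> n) t = R" if "t \<in> {1..n+1}" for t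
  proof (cases "t \<le> n")
    case True
    then have "n - (n - t) = t" "n - t < n" using that by auto
    then show ?thesis using key[of "n - t"] True
      by (simp add: tildeU_def EU_sell_def pstar_def PS_def)
  next
    case False
    then show ?thesis by (simp add: tildeU_def EU_hold_def R_def)
  qed
  have part1: "indifference_menu M U Y \<Delta> n (pstar M U Y \<Delta> n)"
    unfolding indifference_menu_def using tU by simp
  have part2: "p t = pstar M U Y \<Delta> n t" if ind: "indifference_menu M U Y \<Delta> n p" and tt: "t \<in> {1..n}" for p t
  proof -
    have "tildeU M U Y \<Delta> n p t = tildeU M U Y \<Delta> n p (n+1)"
      using ind tt unfolding indifference_menu_def by auto
    then have e1: "(\<integral>\<omega>. U (((\<Sum>i\<in>{1..<t}. Y i \<omega>) + p t) * \<Delta>) \<partial>M) = R"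
      using tt by (simp add: tildeU_def EU_hold_def EU_sell_def R_def)
    have e2: "(\<integral>\<omega>. U (((\<Sum>i\<in>{1..<t}. Y i \<omega>) + pstar M U Y \<Delta> n t) * \<Delta>) \<partial>M) = R"
      using tU[of t] tt by (simp add: tildeU_def EU_sell_def)
    have t2: "t \<le> n + 1" using tt by auto
    show ?thesis
    proof (rule ccontr)
      assume "p t \<noteq> pstar M U Y \<Delta> n t"
      then consider "p t < pstar M U Y \<Delta> n t" | "p t > pstar M U Y \<Delta> n t" by linarith
      then show False
        using H_less[OF P conc sm D intS[OF t2] posS[OF t2], of "p t" "pstar M U Y \<Delta> n t"]
          H_less[OF P conc sm D intS[OF t2] posS[OF t2], of "pstar M U Y \<Delta> n t" "p t"] e1 e2
        by cases auto
    qed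
  qed
  show ?thesis using part1 part2 by blast
qed

end
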